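(* Let $w=(w_1,\dots,w_n)$ be a random vector with i.i.d. symmetrically distributed components having finite moments $\mathbb{E}[w_1^m]=c_m$ ($c_0=1$, $c_1=0$). Let $m_1,\dots,m_l$ and $n_1,\dots,n_l$ be non-negative integers with $\sum_i m_i$ and $\sum_i n_i$ even and $m_i\ge n_i$ for all $i\in[l]$, and let $z\in\{0,1\}$ be a random binary variable with $P(z=1\mid w)=1-P(z=1\mid -w)$. Then $$\mathbb{E}\Big[\prod_{i=1}^l\frac{w_i^{m_i}}{w_i^{n_i}}\,z\Big]=\frac{\prod_{i=1}^l c_{m_i-n_i}}{2}.$$ *)

theory Defs
  imports "HOL-Probability.Probability"
begin

end

theory Submission
  imports Defs
begin

theorem proposition2:
  fixes M :: "'a measure" and n l :: nat and w :: "nat \<Rightarrow> 'a \<Rightarrow> real"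
    and z :: "'a \<Rightarrow> real" and p :: "(nat \<Rightarrow> real) \<Rightarrow> real"
    and m k :: "nat \<Rightarrow> nat"
  assumes "prob_space M" and "1 \<le> n" and "l \<le> n"
    and "\<forall>i<n. w i \<in> borel_measurable M"
    and "prob_space.indep_vars M (\<lambda>_. borel) w {..<n}"
    and "\<forall>i<n. distr M borel (w i) = distr M borel (w 0)"
    and "distr M borel (\<lambda>x. - w 0 x) = distr M borel (w 0)"
    and "\<forall>j. integrable M (\<lambda>x. w 0 x ^ j)"
    and "z \<in> borel_measurable M" and "\<forall>x\<in>space M. z x \<in> {0, 1}"
    and "p \<in> borel_measurable (PiM {..<n} (\<lambda>_. borel))"
    and "\<forall>v. 0 \<le> p v \<and> p v \<le> 1"
    and "\<forall>B \<in> sets (PiM {..<n} (\<lambda>_. borel)).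
           measure M {x \<in> space M. z x = 1 \<and> (\<lambda>i\<in>{..<n}. w i x) \<in> B}
           = (\<integral>x. indicator B (\<lambda>i\<in>{..<n}. w i x) * p (\<lambda>i\<in>{..<n}. w i x) \<partial>M)"
    and "AE x in M. p (\<lambda>i\<in>{..<n}. w i x) = 1 - p (\<lambda>i\<in>{..<n}. - w i x)"
    and "even (\<Sum>i<l. m i)" and "even (\<Sum>i<l. k i)" and "\<forall>i<l. k i \<le> m i"
  shows "(\<integral>x. (\<Prod>i<l. w i x ^ (m i - k i)) * z x \<partial>M)
         = (\<Prod>i<l. (\<integral>x. w 0 x ^ (m i - k i) \<partial>M)) / 2"
proof -
  interpret prob_space M by fact
  define I where "I = {..<n}"
  define N where "N = PiM I (\<lambda>_. borel :: real measure)"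
  define W where "W x = (\<lambda>i\<in>I. w i x)" for x
  define V where "V x = (\<lambda>i\<in>I. - w i x)" for x
  define d where "d i = m i - k i" for i
  define F where "F v = (\<Prod>i<l. (v i::real) ^ d i)" for v :: "nat \<Rightarrow> real"
  have wm[measurable]: "w i \<in> borel_measurable M" if "i \<in> I" for i
    using assms(4) that I_def by auto
  have Wm[measurable]: "W \<in> measurable M N" unfolding W_def N_def
    by (rule measurable_restrict) auto
  have Vm[measurable]: "V \<in> measurable M N" unfolding V_def N_def
    by (rule measurable_restrict) auto
  have lI: "i \<in> I" if "i < l" for i using that assms(3) I_def by auto
  have Fm[measurable]: "F \<in> borel_measurable N" unfolding F_def N_def
    by (intro borel_measurable_prod borel_measurable_power ballI measurable_component_singleton)
       (auto intro: lI)
  have pm[measurable]: "p \<in> borel_measurable N" using assms(11) N_def I_def by simp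
  have FW: "F (W x) = (\<Prod>i<l. w i x ^ d i)" for x
    unfolding F_def W_def using lI by (intro prod.cong) auto
  have evd: "even (\<Sum>i<l. d i)"
  proof -
    have "(\<Sum>i<l. d i) = (\<Sum>i<l. m i) - (\<Sum>i<l. k i)"
      unfolding d_def using assms(17) by (intro sum_subtractf_nat) auto
    then show ?thesis using assms(15,16) by auto
  qed
  have FV: "F (V x) = F (W x)" for x
  proof -
    have "F (V x) = (\<Prod>i<l. (-1) ^ d i * w i x ^ d i)"
    proof -
      have pmn: "(- w i x)^j = (-1)^j * w i x ^ j" for i j by (rule power_minus)
      show ?thesis unfolding F_def V_def using lI by (intro prod.cong) (auto simp: pmn)
    qed
    also have "\<dots> = (-1) ^ (\<Sum>i<l. d i) * (\<Prod>i<l. w i x ^ d i)"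
      by (simp add: prod.distrib power_sum)
    also have "\<dots> = F (W x)" using evd FW by simp
    finally show ?thesis .
  qed
  have w00: "0 \<in> I" using assms(2) I_def by auto
  then have ne: "I \<noteq> {}" by blast
  have indW: "indep_vars (\<lambda>_. borel) w I" using assms(5) I_def by simp
  have indV: "indep_vars (\<lambda>_. borel) (\<lambda>i x. - w i x) I"
    using indep_vars_compose[OF indW, of "\<lambda>_. uminus" "\<lambda>_. borel"] by (simp add: o_def)
  have dW: "distr M N W = PiM I (\<lambda>i. distr M borel (w i))"
    unfolding N_def W_def
    by (rule indep_vars_iff_distr_eq_PiM'[THEN iffD1, OF ne _ indW]) auto
  have dV: "distr M N V = PiM I (\<lambda>i. distr M borel (\<lambda>x. - w i x))"
    unfolding N_def V_def
    by (rule indep_vars_iff_distr_eq_PiM'[THEN iffD1, OF ne _ indV]) auto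
  have dneg: "distr M borel (\<lambda>x. - w i x) = distr M borel (w i)" if "i \<in> I" for i
  proof -
    have w0: "0 \<in> I" by (rule w00)
    have di: "distr M borel (w i) = distr M borel (w 0)" using assms(6) that unfolding I_def by blast
    have "distr M borel (\<lambda>x. - w i x) = distr (distr M borel (w i)) borel uminus"
      using that by (subst distr_distr) (auto simp: o_def)
    also have "\<dots> = distr (distr M borel (w 0)) borel uminus" using di by simp
    also have "\<dots> = distr M borel (\<lambda>x. - w 0 x)"
      using w0 by (subst distr_distr) (auto simp: o_def)
    also have "\<dots> = distr M borel (w i)" using assms(7) di by simp
    finally show ?thesis .
  qed
  have dWV: "distr M N W = distr M N V"
    unfolding dW dV by (intro PiM_cong) (auto simp: dneg)
  have sym: "(\<integral>x. g (W x) \<partial>M) = (\<integral>x. g (V x) \<partial>M)" if [measurable]: "g \<in> borel_measurable N"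
    for g :: "(nat \<Rightarrow> real) \<Rightarrow> real"
  proof -
    have "(\<integral>x. g (W x) \<partial>M) = integral\<^sup>L (distr M N W) g" by (simp add: integral_distr)
    also have "\<dots> = integral\<^sup>L (distr M N V) g" using dWV by simp
    also have "\<dots> = (\<integral>x. g (V x) \<partial>M)" by (simp add: integral_distr)
    finally show ?thesis .
  qed
  have intw: "integrable M (\<lambda>x. w i x ^ j)" and intw0: "(\<integral>x. w i x ^ j \<partial>M) = (\<integral>x. w 0 x ^ j \<partial>M)"
    if "i \<in> I" for i j
  proof -
    have w0: "0 \<in> I" by (rule w00)
    have di: "distr M borel (w i) = distr M borel (w 0)" using assms(6) that unfolding I_def by blast
    have wim: "w i \<in> borel_measurable M" using that by simp
    have w0m: "w 0 \<in> borel_measurable M" using w0 by simp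
    have e1: "integrable (distr M borel (w i)) (\<lambda>y. y ^ j) \<longleftrightarrow> integrable M (\<lambda>x. w i x ^ j)"
      by (rule integrable_distr_eq[OF wim]) simp
    have e2: "integrable (distr M borel (w 0)) (\<lambda>y. y ^ j) \<longleftrightarrow> integrable M (\<lambda>x. w 0 x ^ j)"
      by (rule integrable_distr_eq[OF w0m]) simp
    show "integrable M (\<lambda>x. w i x ^ j)" using e1 e2 di assms(8) by simp
    have f1: "integral\<^sup>L (distr M borel (w i)) (\<lambda>y. y ^ j) = (\<integral>x. w i x ^ j \<partial>M)"
      by (rule integral_distr[OF wim]) simp
    have f2: "integral\<^sup>L (distr M borel (w 0)) (\<lambda>y. y ^ j) = (\<integral>x. w 0 x ^ j \<partial>M)"
      by (rule integral_distr[OF w0m]) simp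
    show "(\<integral>x. w i x ^ j \<partial>M) = (\<integral>x. w 0 x ^ j \<partial>M)" using f1 f2 di by simp
  qed
  have indP: "indep_vars (\<lambda>_. borel) (\<lambda>i x. w i x ^ d i) {..<l}"
    using indep_vars_compose[OF indep_vars_subset[OF indW], of "{..<l}" "\<lambda>i y. y ^ d i" "\<lambda>_. borel"]
    using lI by (auto simp: o_def)
  have intF: "integrable M (\<lambda>x. F (W x))"
    unfolding FW by (rule indep_vars_integrable[OF _ indP]) (auto intro: intw lI)
  have EF: "(\<integral>x. F (W x) \<partial>M) = (\<Prod>i<l. (\<integral>x. w 0 x ^ d i \<partial>M))"
    unfolding FW by (subst indep_vars_lebesgue_integral[OF _ indP]) (auto intro!: prod.cong intro: intw intw0 lI)
  have p01: "0 \<le> p v" "p v \<le> 1" for v using assms(12) by auto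
  have intpV: "integrable M (\<lambda>x. p (V x) * F (W x))"
  proof (rule Bochner_Integration.integrable_bound[OF intF])
    show "(\<lambda>x. p (V x) * F (W x)) \<in> borel_measurable M" by measurable
    have "norm (p (V x) * F (W x)) \<le> norm (F (W x))" for x
      using p01[of "V x"] by (simp add: abs_mult mult_left_le_one_le)
    then show "AE x in M. norm (p (V x) * F (W x)) \<le> norm (F (W x))" by simp
  qed
  have AEp: "AE x in M. p (W x) = 1 - p (V x)" using assms(14) unfolding W_def V_def I_def .
  have B: "(\<integral>x. p (W x) * F (W x) \<partial>M) = (\<integral>x. F (W x) \<partial>M) - (\<integral>x. p (V x) * F (W x) \<partial>M)"
  proof -
    have "(\<integral>x. p (W x) * F (W x) \<partial>M) = (\<integral>x. F (W x) - p (V x) * F (W x) \<partial>M)"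
    proof (rule integral_cong_AE)
      show "AE x in M. p (W x) * F (W x) = F (W x) - p (V x) * F (W x)"
        using AEp by eventually_elim (simp add: left_diff_distrib)
    qed measurable
    also have "\<dots> = (\<integral>x. F (W x) \<partial>M) - (\<integral>x. p (V x) * F (W x) \<partial>M)"
      using intF intpV by simp
    finally show ?thesis .
  qed
  have C: "(\<integral>x. p (V x) * F (W x) \<partial>M) = (\<integral>x. p (W x) * F (W x) \<partial>M)"
    using sym[of "\<lambda>v. p v * F v"] by (simp add: FV)
  have zeq: "(\<integral>x. F (W x) * z x \<partial>M) = (\<integral>x. p (W x) * F (W x) \<partial>M)"
  proof -
    have zm[measurable]: "z \<in> borel_measurable M" by (rule assms(9))
    have z01: "z x = 0 \<or> z x = 1" if "x \<in> space M" for x using assms(10) that by auto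
    have z0: "0 \<le> z x" if "x \<in> space M" for x using z01[OF that] by auto
    define \<mu>1 where "\<mu>1 = distr (density M (\<lambda>x. ennreal (z x))) N W"
    define \<mu>2 where "\<mu>2 = distr (density M (\<lambda>x. ennreal (p (W x)))) N W"
    have eq: "\<mu>1 = \<mu>2"
    proof (rule measure_eqI)
      show "sets \<mu>1 = sets \<mu>2" by (simp add: \<mu>1_def \<mu>2_def)
      fix A assume "A \<in> sets \<mu>1"
      then have A[measurable]: "A \<in> sets N" by (simp add: \<mu>1_def)
      have Apre[measurable]: "W -` A \<inter> space M \<in> sets M" using Wm A by (rule measurable_sets)
      have S[measurable]: "{x \<in> space M. z x = 1 \<and> W x \<in> A} \<in> sets M" by measurable
      have "emeasure \<mu>1 A = emeasure (density M (\<lambda>x. ennreal (z x))) (W -` A \<inter> space M)"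
        unfolding \<mu>1_def by (subst emeasure_distr) auto
      also have "\<dots> = (\<integral>\<^sup>+x. ennreal (z x) * indicator (W -` A \<inter> space M) x \<partial>M)"
        by (subst emeasure_density) auto
      also have "\<dots> = (\<integral>\<^sup>+x. indicator {x \<in> space M. z x = 1 \<and> W x \<in> A} x \<partial>M)"
      proof (intro nn_integral_cong)
        fix x assume x: "x \<in> space M"
        show "ennreal (z x) * indicator (W -` A \<inter> space M) x = indicator {x \<in> space M. z x = 1 \<and> W x \<in> A} x"
          using z01[OF x] x by (cases "z x = 1") (auto split: split_indicator)
      qed
      also have "\<dots> = emeasure M {x \<in> space M. z x = 1 \<and> W x \<in> A}"
        using S by (rule nn_integral_indicator)
      also have "\<dots> = ennreal (measure M {x \<in> space M. z x = 1 \<and> W x \<in> A})"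
        by (simp add: emeasure_eq_measure)
      also have "\<dots> = ennreal (\<integral>x. indicator A (W x) * p (W x) \<partial>M)"
        using assms(13) A unfolding W_def N_def I_def by simp
      also have "\<dots> = (\<integral>\<^sup>+x. ennreal (indicator A (W x) * p (W x)) \<partial>M)"
      proof (rule nn_integral_eq_integral[symmetric])
        show "integrable M (\<lambda>x. indicator A (W x) * p (W x))"
        proof (rule integrable_const_bound[where B=1])
          have "norm (indicator A (W x) * p (W x) :: real) \<le> 1" for x
            using p01[of "W x"] by (auto split: split_indicator)
          then show "AE x in M. norm (indicator A (W x) * p (W x) :: real) \<le> 1" by simp
        qed measurable
        show "AE x in M. 0 \<le> indicator A (W x) * p (W x)"
          using p01 by simp
      qed
      also have "\<dots> = (\<integral>\<^sup>+x. ennreal (p (W x)) * indicator (W -` A \<inter> space M) x \<partial>M)"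
        by (intro nn_integral_cong) (auto split: split_indicator)
      also have "\<dots> = emeasure (density M (\<lambda>x. ennreal (p (W x)))) (W -` A \<inter> space M)"
        by (subst emeasure_density) auto
      also have "\<dots> = emeasure \<mu>2 A"
        unfolding \<mu>2_def by (subst emeasure_distr) auto
      finally show "emeasure \<mu>1 A = emeasure \<mu>2 A" .
    qed
    have "(\<integral>x. F (W x) * z x \<partial>M) = (\<integral>x. z x *\<^sub>R F (W x) \<partial>M)" by (simp add: mult.commute)
    also have "\<dots> = integral\<^sup>L (density M (\<lambda>x. ennreal (z x))) (\<lambda>x. F (W x))"
      by (rule integral_density[symmetric]) (auto intro!: AE_I2 z0)
    also have "\<dots> = integral\<^sup>L \<mu>1 F"
      unfolding \<mu>1_def by (rule integral_distr[symmetric]) auto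
    also have "\<dots> = integral\<^sup>L \<mu>2 F" using eq by simp
    also have "\<dots> = integral\<^sup>L (density M (\<lambda>x. ennreal (p (W x)))) (\<lambda>x. F (W x))"
      unfolding \<mu>2_def by (rule integral_distr) auto
    also have "\<dots> = (\<integral>x. p (W x) *\<^sub>R F (W x) \<partial>M)"
      by (rule integral_density) (auto simp: p01)
    finally show ?thesis by simp
  qed
  show ?thesis
    using zeq B C EF FW unfolding d_def by simp
qed

end
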